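(* Let $f,g:\mathbb{R}^n\to\mathbb{R}\cup\{+\infty\}$ be two functions with nonempty convex domains and $S,R:\mathbb{R}^n\to\mathbb{R}\cup\{\pm\infty\}$ be even functions. (i) If $f$ is directionally $S$-smooth, then its Legendre transform $f^*$ is directionally $S^*$-convex. (ii) If $g$ is directionally $R$-convex, then $g^*$ is directionally $R^*$-smooth.
   Context: A function $h$ with convex domain is directionally $S$-smooth if $h((1-t)x_0+tx_1)+t(1-t)S(x_1-x_0)\ge(1-t)h(x_0)+th(x_1)$ for all $t\in(0,1)$ and all $x_0,x_1\in\mathbb{R}^n$ with $(1-t)x_0+tx_1\in\mathrm{dom}\,h$; it is directionally $R$-convex if $h((1-t)x_0+tx_1)+t(1-t)R(x_1-x_0)\le(1-t)h(x_0)+th(x_1)$ for all $t\in(0,1)$ and all $x_0,x_1\in\mathrm{dom}\,h$. Legendre transforms: $f^*(y)=\sup_x\{\langle x,y\rangle-f(x)\}$, $S^*(v)=\sup_u\{\langle u,v\rangle-S(u)\}$. *)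

theory Defs
  imports "HOL-Analysis.Analysis" "HOL-Library.Extended_Real"
begin

definition edom :: "('a \<Rightarrow> ereal) \<Rightarrow> 'a set" where
  "edom h = {x. h x < \<infinity>}"

definition legendre :: "(real^'n \<Rightarrow> ereal) \<Rightarrow> real^'n \<Rightarrow> ereal" where
  "legendre f y = (SUP x. ereal (x \<bullet> y) - f x)"

definition dir_smooth :: "(real^'n \<Rightarrow> ereal) \<Rightarrow> (real^'n \<Rightarrow> ereal) \<Rightarrow> bool" where
  "dir_smooth S h \<longleftrightarrow>
     (\<forall>t::real. \<forall>x0 x1. 0 < t \<and> t < 1 \<and> (1 - t) *\<^sub>R x0 + t *\<^sub>R x1 \<in> edom h \<longrightarrow>
        h ((1 - t) *\<^sub>R x0 + t *\<^sub>R x1) + ereal (t * (1 - t)) * S (x1 - x0)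
          \<ge> ereal (1 - t) * h x0 + ereal t * h x1)"

definition dir_convex :: "(real^'n \<Rightarrow> ereal) \<Rightarrow> (real^'n \<Rightarrow> ereal) \<Rightarrow> bool" where
  "dir_convex R h \<longleftrightarrow>
     (\<forall>t::real. \<forall>x0 x1. 0 < t \<and> t < 1 \<and> x0 \<in> edom h \<and> x1 \<in> edom h \<longrightarrow>
        h ((1 - t) *\<^sub>R x0 + t *\<^sub>R x1) + ereal (t * (1 - t)) * R (x1 - x0)
          \<le> ereal (1 - t) * h x0 + ereal t * h x1)"

end

theory Submission
  imports Defs
begin

lemma leg_ge: "ereal (x \<bullet> y) - f x \<le> legendre f y"
  unfolding legendre_def by (rule SUP_upper) auto

lemma leg_le: "(\<And>x. ereal (x \<bullet> y) - f x \<le> B) \<Longrightarrow> legendre f y \<le> B"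
  unfolding legendre_def by (rule SUP_least) auto

lemma leg_low:
  assumes "f z = ereal a" shows "legendre f y > -\<infinity>"
proof -
  have "ereal (z \<bullet> y) - f z \<le> legendre f y" by (rule leg_ge)
  moreover have "ereal (z \<bullet> y) - f z > -\<infinity>" using assms by simp
  ultimately show ?thesis by auto
qed

lemma part1:
  fixes f S :: "real^'n \<Rightarrow> ereal"
  assumes fnm: "\<forall>x. f x \<noteq> -\<infinity>" and dom: "edom f \<noteq> {}" and sm: "dir_smooth S f"
    and t: "0 < t" "t < 1" and y0: "legendre f y0 < \<infinity>" and y1: "legendre f y1 < \<infinity>"
  shows "legendre f ((1-t) *\<^sub>R y0 + t *\<^sub>R y1) + ereal (t*(1-t)) * legendre S (y1 - y0)
     \<le> ereal (1-t) * legendre f y0 + ereal t * legendre f y1"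
proof -
  obtain z where z0: "f z < \<infinity>" using dom unfolding edom_def by auto
  then obtain a where z: "f z = ereal a" using fnm by (cases "f z") auto
  note lowb = leg_low[of f z a, OF z]
  obtain P where P: "legendre f y0 = ereal P" using y0 lowb[of y0] by (cases "legendre f y0") auto
  obtain Q where Q: "legendre f y1 = ereal Q" using y1 lowb[of y1] by (cases "legendre f y1") auto
  define yt where "yt = (1-t) *\<^sub>R y0 + t *\<^sub>R y1"
  define A where "A = (1-t)*P + t*Q"
  define c where "c = t*(1-t)"
  have c: "c > 0" using t by (simp add: c_def)
  have H: "\<And>x0 x1. (1-t) *\<^sub>R x0 + t *\<^sub>R x1 \<in> edom f \<Longrightarrow>
     f ((1-t) *\<^sub>R x0 + t *\<^sub>R x1) + ereal (t*(1-t)) * S (x1 - x0) \<ge> ereal (1-t) * f x0 + ereal t * f x1"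
    using sm t unfolding dir_smooth_def by blast
  have rhs: "ereal (1-t) * legendre f y0 + ereal t * legendre f y1 = ereal A" by (simp add: P Q A_def)
  have ytle: "legendre f yt \<le> ereal A"
  proof (rule leg_le)
    fix x
    show "ereal (x \<bullet> yt) - f x \<le> ereal A"
    proof (cases "f x")
      case (real fx)
      have "ereal (x \<bullet> y0) - f x \<le> ereal P" using leg_ge[of x y0 f] P by simp
      hence a: "x \<bullet> y0 - fx \<le> P" using real by simp
      have "ereal (x \<bullet> y1) - f x \<le> ereal Q" using leg_ge[of x y1 f] Q by simp
      hence b: "x \<bullet> y1 - fx \<le> Q" using real by simp
      have "x \<bullet> yt - fx = (1-t)*(x \<bullet> y0 - fx) + t*(x \<bullet> y1 - fx)"
        by (simp add: yt_def inner_simps algebra_simps)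
      also have "\<dots> \<le> (1-t)*P + t*Q" using a b t by (intro add_mono mult_left_mono) auto
      finally show ?thesis using real by (simp add: A_def)
    qed (use fnm in auto)
  qed
  obtain F where F: "legendre f yt = ereal F" using ytle lowb[of yt] by (cases "legendre f yt") auto
  have Sbound: "ereal (u \<bullet> (y1-y0)) - S u \<le> ereal ((A - F)/c)" for u
  proof (cases "S u")
    case PInf then show ?thesis by simp
  next
    case MInf
    define x0 where "x0 = z - t *\<^sub>R u"
    define x1 where "x1 = z + (1-t) *\<^sub>R u"
    have xe: "(1-t) *\<^sub>R x0 + t *\<^sub>R x1 = z" by (simp add: x0_def x1_def algebra_simps)
    have d: "x1 - x0 = u" by (simp add: x0_def x1_def algebra_simps)
    have "f z + ereal c * S u \<ge> ereal (1-t) * f x0 + ereal t * f x1"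
      using H[of x0 x1] z0 unfolding xe d c_def edom_def by simp
    moreover have "f z + ereal c * S u = -\<infinity>" using MInf c z by simp
    moreover have "ereal (1-t) * f x0 > -\<infinity>" using fnm[rule_format, of x0] t
      by (cases "f x0") auto
    moreover have "ereal t * f x1 > -\<infinity>" using fnm[rule_format, of x1] t
      by (cases "f x1") auto
    ultimately show ?thesis by auto
  next
    case (real s)
    have "legendre f yt \<le> ereal (A - c*(u \<bullet> (y1-y0) - s))"
    proof (rule leg_le)
      fix x show "ereal (x \<bullet> yt) - f x \<le> ereal (A - c*(u \<bullet> (y1-y0) - s))"
      proof (cases "f x")
        case (real fx)
        define x0 where "x0 = x - t *\<^sub>R u"
        define x1 where "x1 = x + (1-t) *\<^sub>R u"
        have xe: "(1-t) *\<^sub>R x0 + t *\<^sub>R x1 = x" by (simp add: x0_def x1_def algebra_simps)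
        have d: "x1 - x0 = u" by (simp add: x0_def x1_def algebra_simps)
        have ineq: "f x + ereal c * S u \<ge> ereal (1-t) * f x0 + ereal t * f x1"
          using H[of x0 x1] real unfolding xe d c_def edom_def by simp
        have ineq2: "ereal (1-t) * f x0 + ereal t * f x1 \<le> ereal (fx + c * s)"
          using ineq real \<open>S u = ereal s\<close> by simp
        have "f x0 \<noteq> \<infinity>"
        proof
          assume "f x0 = \<infinity>"
          hence e: "ereal (1-t) * f x0 + ereal t * f x1 = \<infinity>" using t fnm by (cases "f x1") auto
          have "\<infinity> \<le> ereal (fx + c * s)" using ineq2 unfolding e .
          thus False by simp
        qed
        then obtain f0 where f0: "f x0 = ereal f0" using fnm by (cases "f x0") auto
        have "f x1 \<noteq> \<infinity>"
        proof
          assume "f x1 = \<infinity>"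
          hence e: "ereal (1-t) * f x0 + ereal t * f x1 = \<infinity>" using t f0 by simp
          have "\<infinity> \<le> ereal (fx + c * s)" using ineq2 unfolding e .
          thus False by simp
        qed
        then obtain f1 where f1: "f x1 = ereal f1" using fnm by (cases "f x1") auto
        have i1: "(1-t)*f0 + t*f1 \<le> fx + c * s" using ineq real \<open>S u = ereal s\<close> f0 f1 by simp
        have "ereal (x0 \<bullet> y0) - f x0 \<le> ereal P" using leg_ge[of x0 y0 f] P by simp
        hence a: "x0 \<bullet> y0 - f0 \<le> P" using f0 by simp
        have "ereal (x1 \<bullet> y1) - f x1 \<le> ereal Q" using leg_ge[of x1 y1 f] Q by simp
        hence b: "x1 \<bullet> y1 - f1 \<le> Q" using f1 by simp
        have iden: "(1-t)*(x0 \<bullet> y0) + t*(x1 \<bullet> y1) = x \<bullet> yt + c*(u \<bullet> (y1-y0))"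
          by (simp add: x0_def x1_def yt_def c_def inner_simps algebra_simps)
        have "(1-t)*(x0 \<bullet> y0 - f0) + t*(x1 \<bullet> y1 - f1) \<le> A"
          using a b t unfolding A_def by (intro add_mono mult_left_mono) auto
        hence "x \<bullet> yt - fx \<le> A - c*(u \<bullet> (y1-y0) - s)" using iden i1 by (simp add: algebra_simps)
        then show ?thesis using real by simp
      qed (use fnm in auto)
    qed
    hence "F \<le> A - c*(u \<bullet> (y1-y0) - s)" using F by simp
    hence "c * (u \<bullet> (y1-y0) - s) \<le> A - F" by simp
    hence "u \<bullet> (y1-y0) - s \<le> (A - F)/c" using c by (simp add: pos_le_divide_eq mult.commute)
    then show ?thesis using real by simp
  qed
  have Sle: "legendre S (y1-y0) \<le> ereal ((A-F)/c)" by (rule leg_le) (rule Sbound)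
  show ?thesis
  proof (cases "legendre S (y1-y0)")
    case (real r)
    have "r \<le> (A-F)/c" using Sle real by simp
    hence "c*r \<le> A - F" using c by (simp add: pos_le_divide_eq mult.commute)
    thus ?thesis using real F rhs unfolding yt_def[symmetric] c_def[symmetric] by simp
  next
    case MInf thus ?thesis using c F unfolding yt_def[symmetric] c_def[symmetric] by simp
  next
    case PInf thus ?thesis using Sle by simp
  qed
qed


lemma part2:
  fixes g R :: "real^'n \<Rightarrow> ereal"
  assumes gnm: "\<forall>x. g x \<noteq> -\<infinity>" and dom: "edom g \<noteq> {}" and cv: "dir_convex R g"
    and t: "0 < t" "t < 1" and yt: "legendre g ((1-t) *\<^sub>R y0 + t *\<^sub>R y1) < \<infinity>"
  shows "legendre g ((1-t) *\<^sub>R y0 + t *\<^sub>R y1) + ereal (t*(1-t)) * legendre R (y1 - y0)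
     \<ge> ereal (1-t) * legendre g y0 + ereal t * legendre g y1"
proof -
  obtain z where z0: "g z < \<infinity>" using dom unfolding edom_def by auto
  then obtain a where z: "g z = ereal a" using gnm by (cases "g z") auto
  note lowb = leg_low[of g z a, OF z]
  define ytt where "ytt = (1-t) *\<^sub>R y0 + t *\<^sub>R y1"
  define c where "c = t*(1-t)"
  define w where "w = y1 - y0"
  have c: "c > 0" using t by (simp add: c_def)
  have H: "\<And>x0 x1. g x0 < \<infinity> \<Longrightarrow> g x1 < \<infinity> \<Longrightarrow>
     g ((1-t) *\<^sub>R x0 + t *\<^sub>R x1) + ereal c * R (x1 - x0) \<le> ereal (1-t) * g x0 + ereal t * g x1"
    using cv t unfolding dir_convex_def edom_def c_def by blast
  obtain G where G: "legendre g ytt = ereal G" using yt lowb[of ytt] unfolding ytt_def[symmetric]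
    by (cases "legendre g ytt") auto
  show ?thesis
  proof (cases "legendre R w")
    case PInf thus ?thesis using c G unfolding ytt_def[symmetric] c_def[symmetric] w_def[symmetric] by simp
  next
    case MInf
    have "ereal (0 \<bullet> w) - R 0 \<le> legendre R w" by (rule leg_ge)
    hence R0: "R 0 = \<infinity>" using MInf by (cases "R 0") auto
    have "g z + ereal c * R (z - z) \<le> ereal (1-t) * g z + ereal t * g z" using H[OF z0 z0] by simp
    hence False using R0 z c by simp
    thus ?thesis ..
  next
    case (real r)
    have key: "(1-t)*(x0 \<bullet> y0 - g0) + t*(x1 \<bullet> y1 - g1) \<le> G + c*r"
      if g0: "g x0 = ereal g0" and g1: "g x1 = ereal g1" for x0 x1 g0 g1
    proof -
      define xt where "xt = (1-t) *\<^sub>R x0 + t *\<^sub>R x1"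
      have hc: "g xt + ereal c * R (x1 - x0) \<le> ereal ((1-t)*g0 + t*g1)"
        using H[of x0 x1] g0 g1 unfolding xt_def by simp
      have "ereal ((x1 - x0) \<bullet> w) - R (x1 - x0) \<le> ereal r" using leg_ge[of "x1-x0" w R] real by simp
      hence "R (x1 - x0) \<noteq> -\<infinity>" by auto
      moreover have "R (x1 - x0) \<noteq> \<infinity>"
      proof
        assume e: "R (x1 - x0) = \<infinity>"
        have e2: "g xt + ereal c * R (x1 - x0) = \<infinity>" using e c gnm by (cases "g xt") auto
        have "\<infinity> \<le> ereal ((1-t)*g0 + t*g1)" using hc unfolding e2 .
        thus False by simp
      qed
      ultimately obtain rho where rho: "R (x1 - x0) = ereal rho" by (cases "R (x1 - x0)") auto
      have "g xt \<noteq> \<infinity>"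
      proof
        assume e: "g xt = \<infinity>"
        thus False using hc rho by simp
      qed
      then obtain gt where gt: "g xt = ereal gt" using gnm by (cases "g xt") auto
      have i1: "gt + c*rho \<le> (1-t)*g0 + t*g1" using hc gt rho by simp
      have "ereal ((x1 - x0) \<bullet> w) - R (x1 - x0) \<le> ereal r" using leg_ge[of "x1-x0" w R] real by simp
      hence i2: "(x1 - x0) \<bullet> w - rho \<le> r" using rho by simp
      have "ereal (xt \<bullet> ytt) - g xt \<le> ereal G" using leg_ge[of xt ytt g] G by simp
      hence i3: "xt \<bullet> ytt - gt \<le> G" using gt by simp
      have iden: "(1-t)*(x0 \<bullet> y0) + t*(x1 \<bullet> y1) = xt \<bullet> ytt + c*((x1 - x0) \<bullet> w)"
        by (simp add: xt_def ytt_def c_def w_def inner_simps algebra_simps)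
      have "c*((x1 - x0) \<bullet> w - rho) \<le> c*r" using i2 c by (intro mult_left_mono) auto
      thus ?thesis using iden i1 i3 by (simp add: algebra_simps)
    qed
    define az where "az = z \<bullet> y1 - a"
    have b0: "legendre g y0 \<le> ereal ((G + c*r - t*az)/(1-t))"
    proof (rule leg_le)
      fix x show "ereal (x \<bullet> y0) - g x \<le> ereal ((G + c*r - t*az)/(1-t))"
      proof (cases "g x")
        case (real gx)
        have "(1-t)*(x \<bullet> y0 - gx) \<le> G + c*r - t*az" using key[OF real z] unfolding az_def by simp
        hence "x \<bullet> y0 - gx \<le> (G + c*r - t*az)/(1-t)" using t by (simp add: pos_le_divide_eq mult.commute)
        thus ?thesis using real by simp
      qed (use gnm in auto)
    qed
    obtain P where P: "legendre g y0 = ereal P" using b0 lowb[of y0] by (cases "legendre g y0") auto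
    have b1: "legendre g y1 \<le> ereal ((G + c*r - (1-t)*P)/t)"
    proof (rule leg_le)
      fix x show "ereal (x \<bullet> y1) - g x \<le> ereal ((G + c*r - (1-t)*P)/t)"
      proof (cases "g x")
        case (real gx)
        have "legendre g y0 \<le> ereal ((G + c*r - t*(x \<bullet> y1 - gx))/(1-t))"
        proof (rule leg_le)
          fix x0 show "ereal (x0 \<bullet> y0) - g x0 \<le> ereal ((G + c*r - t*(x \<bullet> y1 - gx))/(1-t))"
          proof (cases "g x0")
            case (real g0)
            have "(1-t)*(x0 \<bullet> y0 - g0) \<le> G + c*r - t*(x \<bullet> y1 - gx)"
              using key[OF real \<open>g x = ereal gx\<close>] by simp
            hence "x0 \<bullet> y0 - g0 \<le> (G + c*r - t*(x \<bullet> y1 - gx))/(1-t)"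
              using t by (simp add: pos_le_divide_eq mult.commute)
            thus ?thesis using real by simp
          qed (use gnm in auto)
        qed
        hence "P \<le> (G + c*r - t*(x \<bullet> y1 - gx))/(1-t)" using P by simp
        hence "(1-t)*P \<le> G + c*r - t*(x \<bullet> y1 - gx)" using t by (simp add: pos_le_divide_eq mult.commute)
        hence "x \<bullet> y1 - gx \<le> (G + c*r - (1-t)*P)/t" using t by (simp add: pos_le_divide_eq mult.commute)
        thus ?thesis using real by simp
      qed (use gnm in auto)
    qed
    obtain Q where Q: "legendre g y1 = ereal Q" using b1 lowb[of y1] by (cases "legendre g y1") auto
    have "Q \<le> (G + c*r - (1-t)*P)/t" using b1 Q by simp
    hence "t*Q \<le> G + c*r - (1-t)*P" using t by (simp add: pos_le_divide_eq mult.commute)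
    thus ?thesis using P Q G real unfolding ytt_def[symmetric] c_def[symmetric] w_def[symmetric] by simp
  qed
qed

theorem proposition2p9:
  fixes f g S R :: "real^'n \<Rightarrow> ereal"
  assumes f_nm: "\<forall>x. f x \<noteq> -\<infinity>" and g_nm: "\<forall>x. g x \<noteq> -\<infinity>"
    and f_dom: "edom f \<noteq> {}" "convex (edom f)"
    and g_dom: "edom g \<noteq> {}" "convex (edom g)"
    and S_even: "\<forall>u. S (- u) = S u"
    and R_even: "\<forall>u. R (- u) = R u"
  shows "(dir_smooth S f \<longrightarrow> dir_convex (legendre S) (legendre f))
       \<and> (dir_convex R g \<longrightarrow> dir_smooth (legendre R) (legendre g))"
proof (intro conjI impI)
  assume "dir_smooth S f"
  then show "dir_convex (legendre S) (legendre f)"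
    unfolding dir_convex_def edom_def using part1[OF f_nm f_dom(1)] by blast
next
  assume "dir_convex R g"
  then show "dir_smooth (legendre R) (legendre g)"
    unfolding dir_smooth_def edom_def using part2[OF g_nm g_dom(1)] by blast
qed

end
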